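(* Let $n\geqslant 2$ and let $\alpha\in\mathcal{PMI}_n\setminus\mathcal{POI}_n$ have rank $n-1$. Then: (1) if $n\equiv 0$ or $n\equiv 3 \pmod 4$, then $\alpha\in\mathcal{AM}_n$ if and only if $\mathrm{d}(\alpha)$ and $\mathrm{i}(\alpha)$ have distinct parities; (2) if $n\equiv 1$ or $n\equiv 2\pmod 4$, then $\alpha\in\mathcal{AM}_n$ if and only if $\mathrm{d}(\alpha)$ and $\mathrm{i}(\alpha)$ have the same parity.
   Context: Let $\Omega_n=\{1<2<\cdots<n\}$ and $\mathcal{I}_n$ the monoid of all partial injective maps of $\Omega_n$; the rank of $\alpha$ is $|\mathrm{Im}(\alpha)|$. $\mathcal{AI}_n$ is the set of all $\alpha\in\mathcal{I}_n$ with $\alpha=\sigma|_{\mathrm{Dom}(\alpha)}$ for some even permutation $\sigma$ of $\Omega_n$. $\mathcal{POI}_n$ is the set of order-preserving elements of $\mathcal{I}_n$; $\mathcal{PMI}_n$ is the set of monotone elements (order-preserving or order-reversing, where order-reversing means $x\leqslant y$ implies $x\alpha\geqslant y\alpha$ on the domain). $\mathcal{AM}_n=\mathcal{AI}_n\cap\mathcal{PMI}_n$. For $\alpha$ of rank $n-1$, $\mathrm{d}(\alpha)$ is the unique element of $\Omega_n\setminus\mathrm{Dom}(\alpha)$ and $\mathrm{i}(\alpha)$ is the unique element of $\Omega_n\setminus\mathrm{Im}(\alpha)$. *)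

theory Defs
  imports "HOL-Combinatorics.Permutations"
begin

definition Omega :: "nat \<Rightarrow> nat set" where
  "Omega n = {1..n}"

definition PI :: "nat \<Rightarrow> (nat \<rightharpoonup> nat) set" where
  "PI n = {a. dom a \<subseteq> Omega n \<and> ran a \<subseteq> Omega n \<and> inj_on a (dom a)}"

definition rank :: "(nat \<rightharpoonup> nat) \<Rightarrow> nat" where
  "rank a = card (ran a)"

definition AI :: "nat \<Rightarrow> (nat \<rightharpoonup> nat) set" where
  "AI n = {a \<in> PI n. \<exists>\<sigma>. \<sigma> permutes Omega n \<and> evenperm \<sigma> \<and>
                         (\<forall>x\<in>dom a. a x = Some (\<sigma> x))}"

definition order_preserving :: "(nat \<rightharpoonup> nat) \<Rightarrow> bool" where
  "order_preserving a \<longleftrightarrow> (\<forall>x\<in>dom a. \<forall>y\<in>dom a. x \<le> y \<longrightarrow> the (a x) \<le> the (a y))"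

definition order_reversing :: "(nat \<rightharpoonup> nat) \<Rightarrow> bool" where
  "order_reversing a \<longleftrightarrow> (\<forall>x\<in>dom a. \<forall>y\<in>dom a. x \<le> y \<longrightarrow> the (a x) \<ge> the (a y))"

definition POI :: "nat \<Rightarrow> (nat \<rightharpoonup> nat) set" where
  "POI n = {a \<in> PI n. order_preserving a}"

definition PMI :: "nat \<Rightarrow> (nat \<rightharpoonup> nat) set" where
  "PMI n = {a \<in> PI n. order_preserving a \<or> order_reversing a}"

definition AM :: "nat \<Rightarrow> (nat \<rightharpoonup> nat) set" where
  "AM n = AI n \<inter> PMI n"

text \<open>For rank n-1: the unique missing element of the domain / image.\<close>
definition dpt :: "nat \<Rightarrow> (nat \<rightharpoonup> nat) \<Rightarrow> nat" where
  "dpt n a = (THE x. x \<in> Omega n - dom a)"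

definition ipt :: "nat \<Rightarrow> (nat \<rightharpoonup> nat) \<Rightarrow> nat" where
  "ipt n a = (THE x. x \<in> Omega n - ran a)"

end

theory Submission
  imports Defs
begin

definition cyc :: "nat \<Rightarrow> nat \<Rightarrow> nat \<Rightarrow> nat" where
  "cyc d j x = (if x = d then j else if d \<le> j \<and> d < x \<and> x \<le> j then x - 1
     else if j < d \<and> j \<le> x \<and> x < d then x + 1 else x)"

lemma cyc_up:
  assumes "d \<le> j" shows "cyc d (Suc j) = transpose j (Suc j) \<circ> cyc d j"
  using assms by (auto simp: fun_eq_iff cyc_def transpose_def)

lemma cyc_down:
  assumes "j \<le> d" shows "cyc (Suc d) j = cyc d j \<circ> transpose d (Suc d)"
  using assms by (auto simp: fun_eq_iff cyc_def transpose_def)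

lemma cyc_same: "cyc d d = id"
  by (auto simp: fun_eq_iff cyc_def)

lemma cyc_up_perm:
  assumes "d \<le> j" "1 \<le> d" "j \<le> n"
  shows "cyc d j permutes {1..n} \<and> (evenperm (cyc d j) \<longleftrightarrow> even (j - d))"
  using assms
proof (induction j rule: dec_induct)
  case base then show ?case by (metis cyc_same permutes_id evenperm_id diff_self_eq_0 even_zero)
next
  case (step k)
  have t: "transpose k (Suc k) permutes {1..n}"
    using step by (intro permutes_swap_id) auto
  have ih: "cyc d k permutes {1..n}" "evenperm (cyc d k) \<longleftrightarrow> even (k - d)" using step by auto
  have "evenperm (transpose k (Suc k) \<circ> cyc d k) \<longleftrightarrow> (evenperm (transpose k (Suc k)) = evenperm (cyc d k))"
    by (rule evenperm_comp) (auto intro: permutes_imp_permutation[OF _ t] permutes_imp_permutation[OF _ ih(1)])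
  moreover have "even (Suc k - d) \<longleftrightarrow> \<not> even (k - d)" using step.hyps by (simp add: Suc_diff_le)
  moreover have "cyc d (Suc k) permutes {1..n}" unfolding cyc_up[OF step.hyps(1)] by (rule permutes_compose[OF ih(1) t])
  ultimately show ?case unfolding cyc_up[OF step.hyps(1)] using ih(2) evenperm_swap[of k "Suc k"] n_not_Suc_n[of k] by blast
qed

lemma cyc_down_perm:
  assumes "j \<le> d" "1 \<le> j" "d \<le> n"
  shows "cyc d j permutes {1..n} \<and> (evenperm (cyc d j) \<longleftrightarrow> even (d - j))"
  using assms
proof (induction d rule: dec_induct)
  case base then show ?case by (metis cyc_same permutes_id evenperm_id diff_self_eq_0 even_zero)
next
  case (step k)
  have t: "transpose k (Suc k) permutes {1..n}"
    using step by (intro permutes_swap_id) auto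
  have ih: "cyc k j permutes {1..n}" "evenperm (cyc k j) \<longleftrightarrow> even (k - j)" using step by auto
  have "evenperm (cyc k j \<circ> transpose k (Suc k)) \<longleftrightarrow> (evenperm (cyc k j) = evenperm (transpose k (Suc k)))"
    by (rule evenperm_comp) (auto intro: permutes_imp_permutation[OF _ t] permutes_imp_permutation[OF _ ih(1)])
  moreover have "even (Suc k - j) \<longleftrightarrow> \<not> even (k - j)" using step.hyps by (simp add: Suc_diff_le)
  moreover have "cyc (Suc k) j permutes {1..n}" unfolding cyc_down[OF step.hyps(1)] by (rule permutes_compose[OF t ih(1)])
  ultimately show ?case unfolding cyc_down[OF step.hyps(1)] using ih(2) evenperm_swap[of k "Suc k"] n_not_Suc_n[of k] by blast
qed

lemma cyc_perm:
  assumes "d \<in> {1..n}" "j \<in> {1..n}"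
  shows "cyc d j permutes {1..n} \<and> (evenperm (cyc d j) \<longleftrightarrow> even (d + j))"
proof (cases "d \<le> j")
  case True then show ?thesis using cyc_up_perm[of d j n] assms by auto
next
  case False then show ?thesis using cyc_down_perm[of j d n] assms by auto
qed

definition rev_on :: "nat \<Rightarrow> nat \<Rightarrow> nat \<Rightarrow> nat" where
  "rev_on a b x = (if a \<le> x \<and> x \<le> b then a + b - x else x)"

lemma rev_on_step: "a < b \<Longrightarrow> rev_on a b = transpose a b \<circ> rev_on (Suc a) (b - 1)"
  by (auto simp: fun_eq_iff rev_on_def transpose_def)

lemma rev_on_triv: "b \<le> a \<Longrightarrow> rev_on a b = id"
  by (auto simp: fun_eq_iff rev_on_def)

lemma rev_on_perm_aux:
  "\<forall>a b. b + 1 - a = k \<longrightarrow> 1 \<le> a \<longrightarrow> b \<le> n \<longrightarrow>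
     rev_on a b permutes {1..n} \<and> (evenperm (rev_on a b) \<longleftrightarrow> even (k div 2))"
proof (induction k rule: less_induct)
  case (less k)
  show ?case
  proof (intro allI impI)
    fix a b assume h: "b + 1 - a = k" "1 \<le> a" "b \<le> n"
    show "rev_on a b permutes {1..n} \<and> (evenperm (rev_on a b) \<longleftrightarrow> even (k div 2))"
    proof (cases "a < b")
      case False then show ?thesis using h by (auto simp: rev_on_triv)
    next
      case True
      have ih: "rev_on (Suc a) (b - 1) permutes {1..n} \<and> (evenperm (rev_on (Suc a) (b - 1)) \<longleftrightarrow> even ((k - 2) div 2))"
        using less.IH[of "k - 2"] h True by auto
      have t: "transpose a b permutes {1..n}" using h True by (intro permutes_swap_id) auto
      have "evenperm (transpose a b \<circ> rev_on (Suc a) (b - 1)) \<longleftrightarrow> (evenperm (transpose a b) = evenperm (rev_on (Suc a) (b - 1)))"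
        using permutes_imp_permutation[OF _ t] permutes_imp_permutation[OF _ ih[THEN conjunct1]]
        by (intro evenperm_comp) auto
      moreover have "2 \<le> k" using h True by simp
      then have "even (k div 2) \<longleftrightarrow> \<not> even ((k - 2) div 2)" by presburger
      moreover have "rev_on a b permutes {1..n}" unfolding rev_on_step[OF True] by (rule permutes_compose[OF ih[THEN conjunct1] t])
      ultimately show ?thesis unfolding rev_on_step[OF True] using ih evenperm_swap[of a b] True by blast
    qed
  qed
qed

lemma rev_perm: "rev_on 1 n permutes {1..n} \<and> (evenperm (rev_on 1 n) \<longleftrightarrow> even (n div 2))"
  using rev_on_perm_aux[of n n] by auto

lemma strict_mono_unique:
  fixes f g :: "nat \<Rightarrow> nat"
  assumes "strict_mono_on A f" "strict_mono_on A g" "f ` A = g ` A"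
  shows "x \<in> A \<Longrightarrow> f x = g x"
proof (induction x rule: less_induct)
  case (less x)
  show ?case
  proof (rule ccontr)
    assume ne: "f x \<noteq> g x"
    show False
    proof (cases "f x < g x")
      case True
      then obtain y where y: "y \<in> A" "f x = g y" using assms(3) less.prems by (metis imageE image_eqI)
      then have "y < x" using True assms(2) less.prems
        by (metis linorder_neqE_nat not_less_iff_gr_or_eq strict_mono_onD)
      then have "f y = g y" using less.IH y by auto
      then have "f y = f x" using y by simp
      then show False using \<open>y < x\<close> assms(1) y less.prems by (metis strict_mono_onD less_irrefl)
    next
      case False
      then have lt: "g x < f x" using ne by simp
      then obtain y where y: "y \<in> A" "g x = f y" using assms(3) less.prems by (metis imageE image_eqI)
      then have "y < x" using lt assms(1) less.prems
        by (metis linorder_neqE_nat not_less_iff_gr_or_eq strict_mono_onD)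
      then have "f y = g y" using less.IH y by auto
      then have "g y = g x" using y by simp
      then show False using \<open>y < x\<close> assms(2) y less.prems by (metis strict_mono_onD less_irrefl)
    qed
  qed
qed


lemma final_arith:
  fixes n d i :: nat
  assumes "1 \<le> i" "i \<le> n"
  shows "(n mod 4 = 0 \<or> n mod 4 = 3 \<longrightarrow>
            ((even (n div 2) \<longleftrightarrow> even (d + (n + 1 - i))) \<longleftrightarrow> even d \<noteq> even i))
       \<and> (n mod 4 = 1 \<or> n mod 4 = 2 \<longrightarrow>
            ((even (n div 2) \<longleftrightarrow> even (d + (n + 1 - i))) \<longleftrightarrow> even d = even i))"
proof -
  have e: "even (d + (n + 1 - i)) \<longleftrightarrow> ((even d \<longleftrightarrow> even n) \<longleftrightarrow> odd i)" using assms by simp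
  have "n mod 4 = 0 \<or> n mod 4 = 1 \<or> n mod 4 = 2 \<or> n mod 4 = 3" by arith
  moreover have "n mod 4 = 0 \<Longrightarrow> even n \<and> even (n div 2)" by presburger
  moreover have "n mod 4 = 1 \<Longrightarrow> odd n \<and> even (n div 2)" by presburger
  moreover have "n mod 4 = 2 \<Longrightarrow> even n \<and> odd (n div 2)" by presburger
  moreover have "n mod 4 = 3 \<Longrightarrow> odd n \<and> odd (n div 2)" by presburger
  ultimately show ?thesis unfolding e by auto
qed

theorem proposition2p2:
  fixes n :: nat and a :: "nat \<rightharpoonup> nat"
  assumes "n \<ge> 2"
    and "a \<in> PMI n - POI n"
    and "rank a = n - 1"
  shows "(n mod 4 = 0 \<or> n mod 4 = 3 \<longrightarrow>
            (a \<in> AM n \<longleftrightarrow> even (dpt n a) \<noteq> even (ipt n a)))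
       \<and> (n mod 4 = 1 \<or> n mod 4 = 2 \<longrightarrow>
            (a \<in> AM n \<longleftrightarrow> even (dpt n a) = even (ipt n a)))"
proof -
  define \<Omega> where "\<Omega> = {1..n}"
  have PI: "a \<in> PI n" and rev: "order_reversing a" using assms(2) by (auto simp: PMI_def POI_def)
  have domS: "dom a \<subseteq> \<Omega>" and ranS: "ran a \<subseteq> \<Omega>" and inj: "inj_on a (dom a)"
    using PI by (auto simp: PI_def Omega_def \<Omega>_def)
  have finO: "finite \<Omega>" and cardO: "card \<Omega> = n" by (auto simp: \<Omega>_def)
  have ran_eq: "ran a = (\<lambda>x. the (a x)) ` dom a" by (force simp: ran_def dom_def)
  have inj2: "inj_on (\<lambda>x. the (a x)) (dom a)"
    using inj by (auto simp: inj_on_def dom_def)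
  have cr: "card (ran a) = n - 1" using assms(3) by (simp add: rank_def)
  have cd: "card (dom a) = n - 1" using cr ran_eq inj2 by (simp add: card_image)
  have finD: "finite (dom a)" using domS finO finite_subset by blast
  have finR: "finite (ran a)" using ranS finO finite_subset by blast
  have "card (\<Omega> - ran a) = 1" using card_Diff_subset[OF finR ranS] cr cardO assms(1) by simp
  then obtain i where i: "\<Omega> - ran a = {i}" by (meson card_1_singletonE)
  have "card (\<Omega> - dom a) = 1" using card_Diff_subset[OF finD domS] cd cardO assms(1) by simp
  then obtain d where d: "\<Omega> - dom a = {d}" by (meson card_1_singletonE)
  have OO: "Omega n = \<Omega>" by (simp add: Omega_def \<Omega>_def)
  have ipt: "ipt n a = i" unfolding ipt_def OO i by simp
  have dpt: "dpt n a = d" unfolding dpt_def OO d by simp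
  have iO: "i \<in> \<Omega>" and dO: "d \<in> \<Omega>" using i d by auto
  have domE: "dom a = \<Omega> - {d}" using d domS by auto
  have ranE: "ran a = \<Omega> - {i}" using i ranS by auto
  have dec: "the (a y) < the (a x)" if "x \<in> dom a" "y \<in> dom a" "x < y" for x y
  proof -
    have "the (a y) \<le> the (a x)" using rev that unfolding order_reversing_def by auto
    moreover have "the (a y) \<noteq> the (a x)" using inj2 that by (metis inj_on_contraD less_irrefl)
    ultimately show ?thesis by simp
  qed
  define j where "j = n + 1 - i"
  have jO: "j \<in> \<Omega>" using iO by (auto simp: j_def \<Omega>_def)
  define \<rho> where "\<rho> = rev_on 1 n"
  define c where "c = cyc d j"
  define \<sigma> where "\<sigma> = \<rho> \<circ> c"
  have rho: "\<rho> permutes \<Omega>" "evenperm \<rho> \<longleftrightarrow> even (n div 2)"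
    using rev_perm[of n] by (auto simp: \<rho>_def \<Omega>_def)
  have cP: "c permutes \<Omega>" "evenperm c \<longleftrightarrow> even (d + j)"
    using cyc_perm[of d n j] dO jO by (auto simp: c_def \<Omega>_def)
  have rho_inv: "\<rho> (\<rho> y) = y" if "y \<in> \<Omega>" for y using that by (auto simp: \<rho>_def rev_on_def \<Omega>_def)
  have rho_i: "\<rho> i = j" using iO by (auto simp: \<rho>_def rev_on_def \<Omega>_def j_def)
  have cd_j: "c d = j" by (simp add: c_def cyc_def)
  have sigma_d: "\<sigma> d = i" using rho_i rho_inv[OF iO] cd_j by (simp add: \<sigma>_def)
  have sP: "\<sigma> permutes \<Omega>" unfolding \<sigma>_def by (rule permutes_compose[OF cP(1) rho(1)])
  have sE: "evenperm \<sigma> \<longleftrightarrow> (even (n div 2) \<longleftrightarrow> even (d + j))"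
    unfolding \<sigma>_def using evenperm_comp[OF permutes_imp_permutation[OF finO rho(1)] permutes_imp_permutation[OF finO cP(1)]] rho(2) cP(2) by blast
  define g where "g x = \<rho> (the (a x))" for x
  have g_mono: "strict_mono_on (dom a) g"
  proof (rule strict_mono_onI)
    fix x y assume h: "x \<in> dom a" "y \<in> dom a" "x < y"
    have "the (a y) < the (a x)" using dec h by blast
    moreover have "the (a x) \<in> \<Omega>" "the (a y) \<in> \<Omega>" using ranS ran_eq h by auto
    ultimately show "g x < g y" by (auto simp: g_def \<rho>_def rev_on_def \<Omega>_def)
  qed
  have c_mono: "strict_mono_on (dom a) c"
    by (rule strict_mono_onI) (auto simp: domE c_def cyc_def)
  have injc: "inj c" using cP(1) permutes_inj by blast
  have injr: "inj \<rho>" using rho(1) permutes_inj by blast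
  have "c ` dom a = \<Omega> - {j}" unfolding domE
    using image_set_diff[OF injc, of \<Omega> "{d}"] permutes_image[OF cP(1)] cd_j by simp
  moreover have "g ` dom a = \<Omega> - {j}"
  proof -
    have "g ` dom a = \<rho> ` ran a" unfolding ran_eq g_def by (simp add: image_image)
    also have "\<dots> = \<Omega> - {j}" unfolding ranE
      using image_set_diff[OF injr, of \<Omega> "{i}"] permutes_image[OF rho(1)] rho_i by simp
    finally show ?thesis .
  qed
  ultimately have gc: "g x = c x" if "x \<in> dom a" for x
    using strict_mono_unique[OF g_mono c_mono] that by simp
  have agree: "a x = Some (\<sigma> x)" if "x \<in> dom a" for x
  proof -
    have "the (a x) \<in> \<Omega>" using ranS ran_eq that by auto
    then have "the (a x) = \<rho> (c x)" using gc[OF that] rho_inv by (metis g_def)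
    then show ?thesis using that by (auto simp: \<sigma>_def)
  qed
  have AI: "a \<in> AI n \<longleftrightarrow> evenperm \<sigma>"
  proof
    assume "evenperm \<sigma>"
    then show "a \<in> AI n" using PI sP agree unfolding AI_def OO by blast
  next
    assume "a \<in> AI n"
    then obtain \<tau> where t: "\<tau> permutes \<Omega>" "evenperm \<tau>" "\<forall>x\<in>dom a. a x = Some (\<tau> x)"
      unfolding AI_def OO by blast
    have "\<tau> = \<sigma>"
    proof
      fix x
      show "\<tau> x = \<sigma> x"
      proof (cases "x \<in> dom a")
        case True then have "a x = Some (\<tau> x)" "a x = Some (\<sigma> x)" using t(3) agree by auto
        then show ?thesis by simp
      next
        case False
        show ?thesis
        proof (cases "x = d")
          case True
          have "\<tau> ` dom a = ran a" unfolding ran_eq by (intro image_cong) (simp_all add: t(3))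
          moreover have "\<tau> d \<notin> \<tau> ` dom a" using inj_image_mem_iff[OF permutes_inj[OF t(1)]] domE by simp
          moreover have "\<tau> d \<in> \<Omega>" using permutes_in_image[OF t(1)] dO by simp
          ultimately have "\<tau> d = i" using i by blast
          then show ?thesis using True sigma_d by simp
        next
          case False
          then have "x \<notin> \<Omega>" using \<open>x \<notin> dom a\<close> domE by auto
          then show ?thesis using permutes_not_in[OF t(1)] permutes_not_in[OF sP] by simp
        qed
      qed
    qed
    then show "evenperm \<sigma>" using t(2) by simp
  qed
  have AM: "a \<in> AM n \<longleftrightarrow> (even (n div 2) \<longleftrightarrow> even (d + (n + 1 - i)))"
    using AI sE assms(2) by (simp add: AM_def j_def)
  have "1 \<le> i" "i \<le> n" using iO by (auto simp: \<Omega>_def)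
  from final_arith[OF this, of d] show ?thesis unfolding AM ipt dpt .
qed

end
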